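(* Let $\mathcal D$ be a real-label template data distribution in which every template $z\in\mathrm{supp}(\mu_{\mathrm{tmplt}})$ consists only of wildcards ($z\in\mathcal W^k$), and suppose the label function $f_*$ is non-constant on $\mathrm{supp}(\mu_{\mathrm{tmplt}})$. Let $\mathcal X_{uns}$ be as below and assume $|\mathcal X_{uns}|\ge k$. Then for any SGD step $t$ and any step sizes, there is a string $x\in\mathcal X_{uns}^k$ matching some template $z\in\mathrm{supp}(\mu_{\mathrm{tmplt}})$ such that $$\mathbb E_{\theta^t}\big[(f_{\mathrm{MLP}}(x;\theta^t)-f_*(z))^2\big]\ge c>0,$$ where $c$ depends only on $\mu_{\mathrm{tmplt}}$ and $f_*$.
   Context: Let $\mathcal X$ be a finite alphabet of tokens with $m=|\mathcal X|$, and $\mathcal W$ a finite alphabet of wildcards disjoint from $\mathcal X$. A template is a string $z\in(\mathcal X\cup\mathcal W)^k$. A substitution map is an injective function $s:\mathcal W\to\mathcal X$; $\mathrm{sub}(z,s)\in\mathcal X^k$ denotes the string with $i$-th entry $z_i$ if $z_i\in\mathcal X$ and $s(z_i)$ if $z_i\in\mathcal W$. A string $x\in\mathcal X^k$ matches template $z$ if $x=\mathrm{sub}(z,s)$ for some substitution map $s$ with $s(\mathcal W)\cap\{z_1,\dots,z_k\}=\emptyset$. A real-label template data distribution $\mathcal D(\mu_{\mathrm{tmplt}},\{\mu_{sub,z}\}_z,f_*,\sigma)$ is given by a distribution $\mu_{\mathrm{tmplt}}$ on templates, for each $z\in\mathrm{supp}(\mu_{\mathrm{tmplt}})$ a distribution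 $\mu_{sub,z}$ on substitution maps, a label function $f_*:\mathrm{supp}(\mu_{\mathrm{tmplt}})\to\mathbb R$ and a noise level $\sigma\ge 0$; a sample is $(x,y)=(\mathrm{sub}(z,s),f_*(z)+\xi)$ with $z\sim\mu_{\mathrm{tmplt}}$, $s\sim\mu_{sub,z}$, $\xi\sim N(0,\sigma^2)$ independent. $\mathcal X=\mathcal X_{seen}\sqcup\mathcal X_{uns}$, where $\mathcal X_{seen}$ is the smallest set with $x\in\mathcal X_{seen}^k$ almost surely for $(x,y)\sim\mathcal D$. The MLP with depth $L$, width $d$ and differentiable activation $\phi$ has weights $\theta=\{W_1,\dots,W_L,w\}$ with $W_1\in\mathbb R^{d\times km}$, $W_\ell\in\mathbb R^{d\times d}$ ($\ell\ge2$), $w\in\mathbb R^d$, and outputs $f_{\mathrm{MLP}}(x;\theta)=w^Tz_L(x;\theta)$ where $z_0(x)=(e_{x_1},\dots,e_{x_k})\in\mathbb R^{km}$ and $z_\ell(x;\theta)=\phi(W_\ell z_{\ell-1}(x;\theta))$ elementwise. One-pass SGD: $\theta^0$ has independent Gaussian entries, i.i.d. within each of $W_1^0,\dots,W_L^0,w^0$; then $\theta^s=\theta^{s-1}-\eta_s\nabla_\theta(f_{\mathrm{MLP}}(x^s;\theta)-y^s)^2|_{\theta=\theta^{s-1}}$ with fresh independent samples $(x^s,y^s)\sim\mathcal D$ and step sizes $\eta_s>0$. *)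

theory Defs
  imports "HOL-Probability.Probability"
begin

text \<open>Tokens have type 'x, wildcards type 'w (disjoint by construction);
  a template entry is of type 'x + 'w (Inl = token, Inr = wildcard).
  Strings and templates are lists (of length k).\<close>

type_synonym ('x, 'w) template = "('x + 'w) list"

definition sub :: "('x, 'w) template \<Rightarrow> ('w \<Rightarrow> 'x) \<Rightarrow> 'x list" where
  "sub z s = map (case_sum id s) z"

definition matches :: "'x list \<Rightarrow> ('x, 'w) template \<Rightarrow> bool" where
  "matches x z \<longleftrightarrow> (\<exists>s::'w \<Rightarrow> 'x. inj s \<and> range s \<inter> {a. Inl a \<in> set z} = {} \<and> x = sub z s)"

definition noise :: "real \<Rightarrow> real measure" where
  "noise \<sigma> = (if \<sigma> = 0 then return borel 0 else density lborel (normal_density 0 \<sigma>))"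

definition template_data :: "nat \<Rightarrow> ('x, 'w) template pmf \<Rightarrow> (('x, 'w) template \<Rightarrow> ('w \<Rightarrow> 'x) pmf)
    \<Rightarrow> real \<Rightarrow> bool" where
  "template_data k \<mu> \<mu>sub \<sigma> \<longleftrightarrow> \<sigma> \<ge> 0 \<and> (\<forall>z \<in> set_pmf \<mu>. length z = k) \<and>
      (\<forall>z \<in> set_pmf \<mu>. \<forall>s \<in> set_pmf (\<mu>sub z). inj s)"

definition data_dist :: "('x, 'w) template pmf \<Rightarrow> (('x, 'w) template \<Rightarrow> ('w \<Rightarrow> 'x) pmf)
    \<Rightarrow> (('x, 'w) template \<Rightarrow> real) \<Rightarrow> real \<Rightarrow> ('x list \<times> real) measure" where
  "data_dist \<mu> \<mu>sub fstar \<sigma> =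
     distr (measure_pmf (bind_pmf \<mu> (\<lambda>z. map_pmf (\<lambda>s. (z, s)) (\<mu>sub z))) \<Otimes>\<^sub>M noise \<sigma>)
           (count_space UNIV \<Otimes>\<^sub>M borel)
           (\<lambda>((z, s), \<xi>). (sub z s, fstar z + \<xi>))"

definition X_seen :: "('x list \<times> real) measure \<Rightarrow> 'x set" where
  "X_seen D = \<Inter> {S. AE p in D. set (fst p) \<subseteq> S}"

definition X_uns :: "('x list \<times> real) measure \<Rightarrow> 'x set" where
  "X_uns D = UNIV - X_seen D"

text \<open>Parameter indices: PW1 r i a is the entry of W_1 in row r and column (i,a)
  (position i, token a, i.e. the coordinate of e_{x_i} in block i of z_0);
  PW l r j is entry (r,j) of W_l (l >= 2); Pw r is entry r of w.\<close>
datatype 'x pidx = PW1 nat nat 'x | PW nat nat nat | Pw nat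

definition params :: "nat \<Rightarrow> nat \<Rightarrow> nat \<Rightarrow> 'x pidx set" where
  "params k L d =
     {PW1 r i a | r i a. r < d \<and> i < k} \<union> {PW l r j | l r j. 2 \<le> l \<and> l \<le> L \<and> r < d \<and> j < d}
     \<union> {Pw r | r. r < d}"

text \<open>Group of a parameter: 1 for W_1, l for W_l, 0 for w (entries i.i.d. within a group).\<close>
fun pgroup :: "'x pidx \<Rightarrow> nat" where
  "pgroup (PW1 _ _ _) = 1"
| "pgroup (PW l _ _) = l"
| "pgroup (Pw _) = 0"

definition z0 :: "'x list \<Rightarrow> nat \<Rightarrow> 'x \<Rightarrow> real" where
  "z0 x i a = (if x ! i = a then 1 else 0)"

fun hidden :: "(real \<Rightarrow> real) \<Rightarrow> nat \<Rightarrow> nat \<Rightarrow> ('x::finite pidx \<Rightarrow> real) \<Rightarrow> 'x list \<Rightarrow> nat \<Rightarrow> nat \<Rightarrow> real" where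
  "hidden \<phi> k d \<theta> x 0 r = 0"
| "hidden \<phi> k d \<theta> x (Suc 0) r = \<phi> (\<Sum>i<k. \<Sum>a\<in>UNIV. \<theta> (PW1 r i a) * z0 x i a)"
| "hidden \<phi> k d \<theta> x (Suc (Suc l)) r =
     \<phi> (\<Sum>j<d. \<theta> (PW (Suc (Suc l)) r j) * hidden \<phi> k d \<theta> x (Suc l) j)"

definition mlp :: "(real \<Rightarrow> real) \<Rightarrow> nat \<Rightarrow> nat \<Rightarrow> nat \<Rightarrow> ('x::finite pidx \<Rightarrow> real) \<Rightarrow> 'x list \<Rightarrow> real" where
  "mlp \<phi> k L d \<theta> x = (\<Sum>r<d. \<theta> (Pw r) * hidden \<phi> k d \<theta> x L r)"

definition sgd_step :: "(real \<Rightarrow> real) \<Rightarrow> nat \<Rightarrow> nat \<Rightarrow> nat \<Rightarrow> real \<Rightarrow> ('x list \<times> real)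
    \<Rightarrow> ('x::finite pidx \<Rightarrow> real) \<Rightarrow> ('x pidx \<Rightarrow> real)" where
  "sgd_step \<phi> k L d \<eta> xy \<theta> =
     restrict (\<lambda>p. \<theta> p - \<eta> * deriv (\<lambda>u. (mlp \<phi> k L d (\<theta>(p := u)) (fst xy) - snd xy)\<^sup>2) (\<theta> p))
              (params k L d)"

fun sgd :: "(real \<Rightarrow> real) \<Rightarrow> nat \<Rightarrow> nat \<Rightarrow> nat \<Rightarrow> (nat \<Rightarrow> real) \<Rightarrow> ('x::finite pidx \<Rightarrow> real)
    \<Rightarrow> (nat \<Rightarrow> 'x list \<times> real) \<Rightarrow> nat \<Rightarrow> ('x pidx \<Rightarrow> real)" where
  "sgd \<phi> k L d \<eta> \<theta>0 smp 0 = \<theta>0"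
| "sgd \<phi> k L d \<eta> \<theta>0 smp (Suc s) = sgd_step \<phi> k L d (\<eta> (Suc s)) (smp (Suc s)) (sgd \<phi> k L d \<eta> \<theta>0 smp s)"

definition init_measure :: "nat \<Rightarrow> nat \<Rightarrow> nat \<Rightarrow> (nat \<Rightarrow> real) \<Rightarrow> (nat \<Rightarrow> real) \<Rightarrow> ('x pidx \<Rightarrow> real) measure" where
  "init_measure k L d m sd = PiM (params k L d) (\<lambda>p. density lborel (normal_density (m (pgroup p)) (sd (pgroup p))))"

definition sgd_space :: "nat \<Rightarrow> nat \<Rightarrow> nat \<Rightarrow> (nat \<Rightarrow> real) \<Rightarrow> (nat \<Rightarrow> real) \<Rightarrow> ('x list \<times> real) measure \<Rightarrow> nat
    \<Rightarrow> (('x pidx \<Rightarrow> real) \<times> (nat \<Rightarrow> 'x list \<times> real)) measure" where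
  "sgd_space k L d m sd D t = init_measure k L d m sd \<Otimes>\<^sub>M PiM {1..t} (\<lambda>_. D)"

end

theory Submission
  imports Defs
begin


definition tau :: "'x \<Rightarrow> 'x \<Rightarrow> 'x \<Rightarrow> 'x" where
  "tau a b c = (if c = a then b else if c = b then a else c)"

lemma tau_tau[simp]: "tau a b (tau a b c) = c"
  by (auto simp: tau_def)

lemma tau_eq_iff: "(tau a b c = e) = (c = tau a b e)"
  by (auto simp: tau_def)

definition perm :: "nat \<Rightarrow> 'x list \<Rightarrow> 'x list \<Rightarrow> 'x pidx \<Rightarrow> 'x pidx" where
  "perm k x1 x2 q = (case q of PW1 r i a \<Rightarrow> if i < k then PW1 r i (tau (x1!i) (x2!i) a) else q | _ \<Rightarrow> q)"

lemma perm_perm[simp]: "perm k x1 x2 (perm k x1 x2 q) = q"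
  by (cases q) (auto simp: perm_def)

lemma perm_params: "(perm k x1 x2 q \<in> params k L d) = (q \<in> params k L d)"
  by (cases q) (auto simp: perm_def params_def)

lemma perm_group: "pgroup (perm k x1 x2 q) = pgroup q"
  by (cases q) (auto simp: perm_def)

lemma sum_tau: "(\<Sum>a\<in>(UNIV::'x::finite set). g (tau u v a) * h a) = (\<Sum>b\<in>UNIV. g b * h (tau u v b))"
proof -
  have "inj (tau u v)" by (metis injI tau_tau)
  moreover have "range (tau u v) = UNIV" by (metis surjI tau_tau)
  ultimately have "(\<Sum>b\<in>UNIV. g b * h (tau u v b)) = (\<Sum>a\<in>UNIV. g (tau u v a) * h (tau u v (tau u v a)))"
    by (metis (no_types, lifting) sum.reindex_cong)
  then show ?thesis by simp
qed

lemma hidden_perm: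
  assumes "\<forall>i<k. tau (x1!i) (x2!i) (y!i) = y'!i"
  shows "hidden \<phi> k d (\<theta> \<circ> perm k x1 x2) y l r = hidden \<phi> k d \<theta> y' l r"
proof (induction l arbitrary: r)
  case 0
  then show ?case by simp
next
  case (Suc l)
  show ?case
  proof (cases l)
    case 0
    have "(\<Sum>a\<in>UNIV. (\<theta> \<circ> perm k x1 x2) (PW1 r i a) * z0 y i a) = (\<Sum>a\<in>UNIV. \<theta> (PW1 r i a) * z0 y' i a)"
      if "i < k" for i
    proof -
      have "(\<Sum>a\<in>UNIV. (\<theta> \<circ> perm k x1 x2) (PW1 r i a) * z0 y i a)
         = (\<Sum>a\<in>UNIV. (\<lambda>b. \<theta> (PW1 r i b)) (tau (x1!i) (x2!i) a) * z0 y i a)"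
        using that by (simp add: perm_def)
      also have "\<dots> = (\<Sum>b\<in>UNIV. \<theta> (PW1 r i b) * z0 y i (tau (x1!i) (x2!i) b))"
        by (rule sum_tau)
      also have "\<dots> = (\<Sum>a\<in>UNIV. \<theta> (PW1 r i a) * z0 y' i a)"
        using assms that by (auto simp: z0_def tau_eq_iff intro!: sum.cong)
      finally show ?thesis .
    qed
    then show ?thesis using 0 by simp
  next
    case (Suc l')
    then show ?thesis using Suc.IH by (simp add: perm_def)
  qed
qed

lemma mlp_perm:
  assumes "\<forall>i<k. tau (x1!i) (x2!i) (y!i) = y'!i"
  shows "mlp \<phi> k L d (\<theta> \<circ> perm k x1 x2) y = mlp \<phi> k L d \<theta> y'"
  unfolding mlp_def hidden_perm[OF assms] by (simp add: perm_def)

lemma upd_perm: "(\<theta> \<circ> perm k x1 x2)(p := u) = (\<theta>(perm k x1 x2 p := u)) \<circ> perm k x1 x2"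
  by (rule ext) (auto, metis perm_perm)

lemma sgd_step_perm:
  assumes "\<forall>i<k. tau (x1!i) (x2!i) (fst xy!i) = fst xy!i"
  shows "sgd_step \<phi> k L d \<eta> xy (\<theta> \<circ> perm k x1 x2) = sgd_step \<phi> k L d \<eta> xy \<theta> \<circ> perm k x1 x2"
proof
  fix p
  show "sgd_step \<phi> k L d \<eta> xy (\<theta> \<circ> perm k x1 x2) p = (sgd_step \<phi> k L d \<eta> xy \<theta> \<circ> perm k x1 x2) p"
    unfolding sgd_step_def upd_perm mlp_perm[OF assms]
    by (simp add: perm_params)
qed

lemma sgd_perm:
  assumes "\<forall>j\<in>{1..t}. \<forall>i<k. tau (x1!i) (x2!i) (fst (smp j)!i) = fst (smp j)!i"
  shows "s \<le> t \<Longrightarrow> sgd \<phi> k L d \<eta> (\<theta> \<circ> perm k x1 x2) smp s = sgd \<phi> k L d \<eta> \<theta> smp s \<circ> perm k x1 x2"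
proof (induction s)
  case 0
  then show ?case by simp
next
  case (Suc s)
  have "\<forall>i<k. tau (x1!i) (x2!i) (fst (smp (Suc s))!i) = fst (smp (Suc s))!i"
    using assms Suc.prems by auto
  have "sgd \<phi> k L d \<eta> (\<theta> \<circ> perm k x1 x2) smp (Suc s)
     = sgd_step \<phi> k L d (\<eta> (Suc s)) (smp (Suc s)) (sgd \<phi> k L d \<eta> \<theta> smp s \<circ> perm k x1 x2)"
    using Suc by (simp del: sgd.simps(1) add: comp_def)
  also have "\<dots> = sgd_step \<phi> k L d (\<eta> (Suc s)) (smp (Suc s)) (sgd \<phi> k L d \<eta> \<theta> smp s) \<circ> perm k x1 x2"
    by (rule sgd_step_perm) fact
  finally show ?case by (simp only: sgd.simps)
qed




lemma deriv_lim:
  fixes f :: "real \<Rightarrow> real"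
  assumes "f differentiable (at x)"
  shows "(\<lambda>n. (f (x + inverse (real (Suc n))) - f x) / inverse (real (Suc n))) \<longlonglongrightarrow> deriv f x"
proof -
  have "(f has_real_derivative deriv f x) (at x)"
    using assms DERIV_deriv_iff_real_differentiable by blast
  then have L: "((\<lambda>h. (f (x + h) - f x) / h) \<longlongrightarrow> deriv f x) (at 0)"
    by (simp add: DERIV_def)
  have lim: "(\<lambda>n. inverse (real (Suc n))) \<longlonglongrightarrow> 0" by (rule LIMSEQ_inverse_real_of_nat)
  have nz: "\<forall>n. inverse (real (Suc n)) \<noteq> 0" by simp
  have A: "\<forall>S. (\<forall>n. S n \<noteq> 0) \<and> S \<longlonglongrightarrow> 0 \<longrightarrow> (\<lambda>n. (\<lambda>h. (f (x + h) - f x) / h) (S n)) \<longlonglongrightarrow> deriv f x"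
    by (rule iffD2[OF LIMSEQ_SEQ_conv L])
  show ?thesis using A[rule_format, OF conjI[OF nz lim]] by simp
qed

lemma hidden_diff:
  assumes phi: "\<forall>u. \<phi> differentiable (at u)"
  shows "(\<lambda>u. hidden \<phi> k d (\<theta>(p := u)) y l r) differentiable (at u0)"
proof (induction l arbitrary: r)
  case 0
  then show ?case by simp
next
  case (Suc l)
  have upd: "(\<lambda>u. (\<theta>(p := u)) q) differentiable (at u0)" for q
    by (cases "q = p") simp_all
  show ?case
  proof (cases l)
    case 0
    have "(\<lambda>u. \<Sum>i<k. \<Sum>a\<in>UNIV. (\<theta>(p := u)) (PW1 r i a) * z0 y i a) differentiable (at u0)"
      apply (rule differentiable_sum, simp, rule ballI)+
      apply (rule differentiable_mult[OF upd])
      apply simp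
      done
    then have "\<phi> \<circ> (\<lambda>u. \<Sum>i<k. \<Sum>a\<in>UNIV. (\<theta>(p := u)) (PW1 r i a) * z0 y i a) differentiable (at u0)"
      using phi differentiable_chain_at by blast
    then show ?thesis using 0 by (simp only: hidden.simps comp_def)
  next
    case (Suc l')
    have "(\<lambda>u. \<Sum>j<d. (\<theta>(p := u)) (PW (Suc (Suc l')) r j) * hidden \<phi> k d (\<theta>(p := u)) y (Suc l') j) differentiable (at u0)"
      apply (rule differentiable_sum, simp, rule ballI)
      apply (rule differentiable_mult[OF upd])
      using Suc.IH \<open>l = Suc l'\<close> by (simp del: fun_upd_apply)
    then have "\<phi> \<circ> (\<lambda>u. \<Sum>j<d. (\<theta>(p := u)) (PW (Suc (Suc l')) r j) * hidden \<phi> k d (\<theta>(p := u)) y (Suc l') j) differentiable (at u0)"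
      using phi differentiable_chain_at by blast
    then show ?thesis using Suc by (simp only: hidden.simps comp_def)
  qed
qed

lemma loss_diff:
  assumes phi: "\<forall>u. \<phi> differentiable (at u)"
  shows "(\<lambda>u. (mlp \<phi> k L d (\<theta>(p := u)) y - c)\<^sup>2) differentiable (at u0)"
proof -
  have upd: "(\<lambda>u. (\<theta>(p := u)) q) differentiable (at u0)" for q
    by (cases "q = p") simp_all
  have "(\<lambda>u. mlp \<phi> k L d (\<theta>(p := u)) y) differentiable (at u0)"
    unfolding mlp_def
    apply (rule differentiable_sum, simp, rule ballI)
    apply (rule differentiable_mult[OF upd])
    by (rule hidden_diff[OF phi])
  then show ?thesis unfolding power2_eq_square
    by (intro differentiable_mult differentiable_diff differentiable_const) (assumption+)
qed




lemma phi_meas: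
  assumes phi: "\<forall>u. \<phi> differentiable (at u)"
  shows "(\<phi>::real\<Rightarrow>real) \<in> borel_measurable borel"
proof (rule borel_measurable_continuous_onI)
  show "continuous_on UNIV \<phi>"
    using phi differentiable_imp_continuous_within continuous_at_imp_continuous_on by blast
qed

lemma hidden_meas:
  assumes phi: "\<forall>u. \<phi> differentiable (at u)"
    and Th: "\<And>q. (\<lambda>\<omega>. \<Theta> \<omega> q) \<in> borel_measurable M"
    and X: "X \<in> M \<rightarrow>\<^sub>M count_space UNIV"
  shows "(\<lambda>\<omega>. hidden \<phi> k d (\<Theta> \<omega>) (X \<omega>) l r) \<in> borel_measurable M"
proof (induction l arbitrary: r)
  case 0
  then show ?case by simp
next
  case (Suc l)
  have ph: "\<phi> \<in> borel_measurable borel" by (rule phi_meas[OF phi])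
  have z: "(\<lambda>\<omega>. z0 (X \<omega>) i a) \<in> borel_measurable M" for i a
    using measurable_compose[OF X, of "\<lambda>x. z0 x i a" borel] by (simp add: comp_def)
  show ?case
  proof (cases l)
    case 0
    have "(\<lambda>\<omega>. \<Sum>i<k. \<Sum>a\<in>UNIV. \<Theta> \<omega> (PW1 r i a) * z0 (X \<omega>) i a) \<in> borel_measurable M"
      using Th z by (intro borel_measurable_sum borel_measurable_times) auto
    from measurable_compose[OF this ph] show ?thesis using 0 by (simp add: comp_def)
  next
    case (Suc l')
    have "(\<lambda>\<omega>. \<Sum>j<d. \<Theta> \<omega> (PW (Suc (Suc l')) r j) * hidden \<phi> k d (\<Theta> \<omega>) (X \<omega>) (Suc l') j) \<in> borel_measurable M"
      using Th Suc.IH \<open>l = Suc l'\<close> by (intro borel_measurable_sum borel_measurable_times) auto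
    from measurable_compose[OF this ph] show ?thesis using Suc by (simp add: comp_def)
  qed
qed

lemma mlp_meas:
  assumes phi: "\<forall>u. \<phi> differentiable (at u)"
    and Th: "\<And>q. (\<lambda>\<omega>. \<Theta> \<omega> q) \<in> borel_measurable M"
    and X: "X \<in> M \<rightarrow>\<^sub>M count_space UNIV"
  shows "(\<lambda>\<omega>. mlp \<phi> k L d (\<Theta> \<omega>) (X \<omega>)) \<in> borel_measurable M"
  unfolding mlp_def using Th hidden_meas[OF phi Th X]
  by (intro borel_measurable_sum borel_measurable_times) auto

lemma step_meas:
  assumes phi: "\<forall>u. \<phi> differentiable (at u)"
    and Th: "\<And>q. (\<lambda>\<omega>. \<Theta> \<omega> q) \<in> borel_measurable M"
    and X: "X \<in> M \<rightarrow>\<^sub>M count_space UNIV"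
    and Y: "Y \<in> borel_measurable M"
  shows "(\<lambda>\<omega>. sgd_step \<phi> k L d e (X \<omega>, Y \<omega>) (\<Theta> \<omega>) p) \<in> borel_measurable M"
proof (cases "p \<in> params k L d")
  case False
  then show ?thesis by (simp add: sgd_step_def)
next
  case True
  let ?h = "\<lambda>\<omega> u. (mlp \<phi> k L d ((\<Theta> \<omega>)(p := u)) (X \<omega>) - Y \<omega>)\<^sup>2"
  let ?e = "\<lambda>n. inverse (real (Suc n))"
  have hm: "(\<lambda>\<omega>. ?h \<omega> (U \<omega>)) \<in> borel_measurable M" if U: "U \<in> borel_measurable M" for U
  proof -
    have "(\<lambda>\<omega>. ((\<Theta> \<omega>)(p := U \<omega>)) q) \<in> borel_measurable M" for q
      using Th U by (cases "q = p") auto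
    from mlp_meas[OF phi this X] show ?thesis using Y by measurable
  qed
  have D: "(\<lambda>\<omega>. deriv (?h \<omega>) (\<Theta> \<omega> p)) \<in> borel_measurable M"
  proof (rule borel_measurable_LIMSEQ_real)
    fix \<omega> show "(\<lambda>n. (?h \<omega> (\<Theta> \<omega> p + ?e n) - ?h \<omega> (\<Theta> \<omega> p)) / ?e n) \<longlonglongrightarrow> deriv (?h \<omega>) (\<Theta> \<omega> p)"
      by (rule deriv_lim[OF loss_diff[OF phi]])
  next
    fix n
    have "(\<lambda>\<omega>. ?h \<omega> (\<Theta> \<omega> p + ?e n)) \<in> borel_measurable M"
      by (rule hm) (use Th in measurable)
    moreover have "(\<lambda>\<omega>. ?h \<omega> (\<Theta> \<omega> p)) \<in> borel_measurable M"
      by (rule hm) (rule Th)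
    ultimately show "(\<lambda>\<omega>. (?h \<omega> (\<Theta> \<omega> p + ?e n) - ?h \<omega> (\<Theta> \<omega> p)) / ?e n) \<in> borel_measurable M"
      by measurable
  qed
  show ?thesis using True D Th unfolding sgd_step_def by simp
qed




lemma init_comp_meas:
  fixes p :: "'x pidx"
  shows "(\<lambda>\<omega>. fst \<omega> p) \<in> borel_measurable (init_measure k L d m sd \<Otimes>\<^sub>M N)"
proof (cases "p \<in> params k L d")
  case True
  have "(\<lambda>\<theta>. \<theta> p) \<in> init_measure k L d m sd \<rightarrow>\<^sub>M density lborel (normal_density (m (pgroup p)) (sd (pgroup p)))"
    unfolding init_measure_def using True by (rule measurable_component_singleton)
  then have "(\<lambda>\<theta>. \<theta> p) \<in> borel_measurable (init_measure k L d m sd)"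
    by (simp cong: measurable_cong_sets)
  have "fst \<in> init_measure k L d m sd \<Otimes>\<^sub>M N \<rightarrow>\<^sub>M init_measure k L d m sd" by (rule measurable_fst)
  from measurable_compose[OF this \<open>(\<lambda>\<theta>. \<theta> p) \<in> borel_measurable _\<close>] show ?thesis by (simp add: comp_def)
next
  case False
  have "\<forall>w\<in>space ((init_measure k L d m sd :: ('x pidx \<Rightarrow> real) measure) \<Otimes>\<^sub>M N). fst w p = undefined"
  proof
    fix w assume "w \<in> space ((init_measure k L d m sd :: ('x pidx \<Rightarrow> real) measure) \<Otimes>\<^sub>M N)"
    then have "fst w \<in> extensional (params k L d)"
      by (auto simp: space_pair_measure init_measure_def space_PiM PiE_def)
    then show "fst w p = undefined" using False by (simp add: extensional_def)
  qed
  then show ?thesis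
    apply (subst measurable_cong[where g="\<lambda>_. undefined"])
    apply auto done
qed

lemma sgd_meas:
  assumes phi: "\<forall>u. \<phi> differentiable (at u)"
    and sD: "sets D = sets (count_space UNIV \<Otimes>\<^sub>M borel)"
  shows "s \<le> t \<Longrightarrow> (\<lambda>\<omega>. sgd \<phi> k L d \<eta> (fst \<omega>) (snd \<omega>) s p) \<in> borel_measurable (sgd_space k L d m sd D t)"
proof (induction s arbitrary: p)
  case 0
  then show ?case unfolding sgd_space_def by (simp add: init_comp_meas)
next
  case (Suc s)
  let ?M = "sgd_space k L d m sd D t"
  have "(\<lambda>\<omega>. snd \<omega> (Suc s)) \<in> ?M \<rightarrow>\<^sub>M D"
    unfolding sgd_space_def
    using measurable_compose[OF measurable_snd measurable_component_singleton[of "Suc s" "{1..t}" "\<lambda>_. D"]] Suc.prems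
    by (simp add: comp_def)
  then have XY: "(\<lambda>\<omega>. snd \<omega> (Suc s)) \<in> ?M \<rightarrow>\<^sub>M (count_space UNIV \<Otimes>\<^sub>M borel)"
    using sD by (simp cong: measurable_cong_sets)
  have X: "(\<lambda>\<omega>. fst (snd \<omega> (Suc s))) \<in> ?M \<rightarrow>\<^sub>M count_space UNIV"
    using measurable_compose[OF XY measurable_fst] by (simp add: comp_def)
  have Y: "(\<lambda>\<omega>. snd (snd \<omega> (Suc s))) \<in> borel_measurable ?M"
    using measurable_compose[OF XY measurable_snd] by (simp add: comp_def)
  have Th: "\<And>q. (\<lambda>\<omega>. sgd \<phi> k L d \<eta> (fst \<omega>) (snd \<omega>) s q) \<in> borel_measurable ?M"
    using Suc by simp
  from step_meas[OF phi Th X Y, where e="\<eta> (Suc s)" and p=p and k=k and L=L and d=d] show ?case by simp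
qed




lemma noise_prob: "0 \<le> \<sigma> \<Longrightarrow> prob_space (noise \<sigma>)"
  by (auto simp: noise_def intro: prob_space_return prob_space_normal_density)

lemma sets_noise: "sets (noise \<sigma>) = sets borel"
  by (simp add: noise_def)

lemma AE_fst_pair:
  assumes N: "sigma_finite_measure N" and P: "AE x in M. P x"
  shows "AE w in M \<Otimes>\<^sub>M N. P (fst w)"
proof -
  interpret sigma_finite_measure N by fact
  from P obtain B where B: "{x \<in> space M. \<not> P x} \<subseteq> B" "emeasure M B = 0" "B \<in> sets M"
    by (auto elim: AE_E)
  have "B \<times> space N \<in> null_sets (M \<Otimes>\<^sub>M N)"
    using B by (intro times_in_null_sets1) auto
  moreover have "{w \<in> space (M \<Otimes>\<^sub>M N). \<not> P (fst w)} \<subseteq> B \<times> space N"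
    using B by (auto simp: space_pair_measure)
  ultimately show ?thesis by (rule AE_I')
qed

lemma AE_snd_pair:
  assumes N: "sigma_finite_measure N" and P: "AE x in N. P x"
  shows "AE w in M \<Otimes>\<^sub>M N. P (snd w)"
proof -
  interpret sigma_finite_measure N by fact
  from P obtain B where B: "{x \<in> space N. \<not> P x} \<subseteq> B" "emeasure N B = 0" "B \<in> sets N"
    by (auto elim: AE_E)
  have "space M \<times> B \<in> null_sets (M \<Otimes>\<^sub>M N)"
    using B by (intro times_in_null_sets2) auto
  moreover have "{w \<in> space (M \<Otimes>\<^sub>M N). \<not> P (snd w)} \<subseteq> space M \<times> B"
    using B by (auto simp: space_pair_measure)
  ultimately show ?thesis by (rule AE_I')
qed

definition Qpmf :: "('x, 'w) template pmf \<Rightarrow> (('x, 'w) template \<Rightarrow> ('w \<Rightarrow> 'x) pmf) \<Rightarrow> (('x, 'w) template \<times> ('w \<Rightarrow> 'x)) pmf" where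
  "Qpmf \<mu> \<mu>sub = bind_pmf \<mu> (\<lambda>z. map_pmf (\<lambda>s. (z, s)) (\<mu>sub z))"

lemma dd_meas:
  fixes \<mu> :: "('x, 'w) template pmf"
  shows "(\<lambda>((z, s), \<xi>). (sub z s, fstar z + \<xi>)) \<in> (measure_pmf (Qpmf \<mu> \<mu>sub) \<Otimes>\<^sub>M noise \<sigma>) \<rightarrow>\<^sub>M (count_space UNIV \<Otimes>\<^sub>M borel)"
proof -
  have s: "sets (measure_pmf (Qpmf \<mu> \<mu>sub) \<Otimes>\<^sub>M noise \<sigma>) = sets (count_space UNIV \<Otimes>\<^sub>M borel)"
    by (intro sets_pair_measure_cong) (simp_all add: sets_noise)
  let ?C = "count_space UNIV :: (('x, 'w) template \<times> ('w \<Rightarrow> 'x)) measure"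
  have a: "(\<lambda>w. sub (fst w) (snd w)) \<in> ?C \<rightarrow>\<^sub>M (count_space UNIV :: 'x list measure)" by simp
  have b: "(\<lambda>w. fstar (fst w)) \<in> borel_measurable ?C" by simp
  have "(\<lambda>x. (sub (fst (fst x)) (snd (fst x)), fstar (fst (fst x)) + snd x)) \<in> (?C \<Otimes>\<^sub>M borel) \<rightarrow>\<^sub>M (count_space UNIV \<Otimes>\<^sub>M (borel::real measure))"
  proof (rule measurable_Pair)
    show "(\<lambda>x. sub (fst (fst x)) (snd (fst x))) \<in> ?C \<Otimes>\<^sub>M (borel::real measure) \<rightarrow>\<^sub>M count_space UNIV"
      using measurable_compose[OF measurable_fst[of ?C "borel::real measure"] a] by (simp add: comp_def)
    have "(\<lambda>x. fstar (fst (fst x))) \<in> borel_measurable (?C \<Otimes>\<^sub>M (borel::real measure))"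
      using measurable_compose[OF measurable_fst[of ?C "borel::real measure"] b] by (simp add: comp_def)
    then show "(\<lambda>x. fstar (fst (fst x)) + snd x) \<in> borel_measurable (?C \<Otimes>\<^sub>M borel)"
      by measurable
  qed
  moreover have "(\<lambda>((z, s), \<xi>). (sub z s, fstar z + \<xi>)) = (\<lambda>x. (sub (fst (fst x)) (snd (fst x)), fstar (fst (fst x)) + snd x))"
    by (rule ext) (simp add: split_def)
  ultimately have "(\<lambda>((z, s), \<xi>). (sub z s, fstar z + \<xi>)) \<in> (?C \<Otimes>\<^sub>M borel) \<rightarrow>\<^sub>M (count_space UNIV \<Otimes>\<^sub>M (borel::real measure))"
    by simp
  then show ?thesis by (subst measurable_cong_sets[OF s refl])
qed

lemma dd_def': "data_dist \<mu> \<mu>sub fstar \<sigma> = distr (measure_pmf (Qpmf \<mu> \<mu>sub) \<Otimes>\<^sub>M noise \<sigma>) (count_space UNIV \<Otimes>\<^sub>M borel)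
           (\<lambda>((z, s), \<xi>). (sub z s, fstar z + \<xi>))"
  by (simp add: data_dist_def Qpmf_def)

lemma dd_sets: "sets (data_dist \<mu> \<mu>sub fstar \<sigma>) = sets (count_space UNIV \<Otimes>\<^sub>M borel)"
  by (simp add: dd_def')

lemma dd_prob: "0 \<le> \<sigma> \<Longrightarrow> prob_space (data_dist \<mu> \<mu>sub fstar \<sigma>)"
  unfolding dd_def'
  by (intro prob_space.prob_space_distr prob_space_pair noise_prob dd_meas prob_space_measure_pmf)

lemma dd_len:
  assumes s: "0 \<le> \<sigma>" and len: "\<forall>z \<in> set_pmf \<mu>. length z = k"
  shows "AE p in data_dist \<mu> \<mu>sub fstar \<sigma>. length (fst p) = k"
proof -
  have set: "{x \<in> space (count_space UNIV \<Otimes>\<^sub>M borel). length (fst x) = k} \<in> sets (count_space UNIV \<Otimes>\<^sub>M (borel::real measure))"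
    by measurable
  have "AE zs in measure_pmf (Qpmf \<mu> \<mu>sub). length (sub (fst zs) (snd zs)) = k"
    using len by (auto simp: AE_measure_pmf_iff Qpmf_def sub_def)
  then have "AE w in measure_pmf (Qpmf \<mu> \<mu>sub) \<Otimes>\<^sub>M noise \<sigma>. length (sub (fst (fst w)) (snd (fst w))) = k"
    by (intro AE_fst_pair prob_space_imp_sigma_finite noise_prob s)
  then show ?thesis
    unfolding dd_def' by (subst AE_distr_iff[OF dd_meas set]) (simp add: case_prod_beta)
qed

lemma dd_seen:
  fixes D :: "('x::finite list \<times> real) measure"
  shows "AE p in D. set (fst p) \<subseteq> X_seen D"
proof -
  have "AE p in D. \<forall>S\<in>{S. AE p in D. set (fst p) \<subseteq> S}. set (fst p) \<subseteq> S"
    by (rule eventually_ball_finite) auto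
  then show ?thesis unfolding X_seen_def by (rule AE_mp) auto
qed




definition Mp :: "(nat \<Rightarrow> real) \<Rightarrow> (nat \<Rightarrow> real) \<Rightarrow> 'x pidx \<Rightarrow> real measure" where
  "Mp m sd p = density lborel (normal_density (m (pgroup p)) (sd (pgroup p)))"

lemma init_def': "init_measure k L d m sd = PiM (params k L d) (Mp m sd)"
  by (simp add: init_measure_def Mp_def[abs_def])

lemma params_group: "p \<in> params k L d \<Longrightarrow> 1 \<le> L \<Longrightarrow> pgroup p \<le> L"
  by (cases p) (auto simp: params_def)

lemma init_prob:
  assumes "\<forall>g\<le>L. sd g > 0" "1 \<le> L"
  shows "prob_space (init_measure k L d m sd)"
  unfolding init_def' Mp_def
proof (rule prob_space_PiM)
  fix i assume "i \<in> params k L d"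
  then have "pgroup i \<le> L" using assms(2) by (rule params_group)
  then have "0 < sd (pgroup i)" using assms(1) by auto
  then show "prob_space (density lborel (normal_density (m (pgroup i)) (sd (pgroup i))))"
    by (rule prob_space_normal_density)
qed

lemma Mp_perm: "Mp m sd (perm k x1 x2 p) = Mp m sd p"
  by (simp add: Mp_def perm_group)

definition T0 :: "nat \<Rightarrow> nat \<Rightarrow> nat \<Rightarrow> 'x list \<Rightarrow> 'x list \<Rightarrow> ('x pidx \<Rightarrow> real) \<Rightarrow> ('x pidx \<Rightarrow> real)" where
  "T0 k L d x1 x2 \<omega> = (\<lambda>n\<in>params k L d. \<omega> (perm k x1 x2 n))"

lemma T0_meas:
  fixes x1 :: "'x list"
  shows "T0 k L d x1 x2 \<in> init_measure k L d m sd \<rightarrow>\<^sub>M init_measure k L d m sd"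
  unfolding init_def' T0_def
proof (rule measurable_restrict)
  fix i :: "'x pidx" assume i: "i \<in> params k L d"
  have "(\<lambda>x. x (perm k x1 x2 i)) \<in> Pi\<^sub>M (params k L d) (Mp m sd) \<rightarrow>\<^sub>M Mp m sd (perm k x1 x2 i)"
    using i by (intro measurable_component_singleton) (simp add: perm_params)
  then show "(\<lambda>x. x (perm k x1 x2 i)) \<in> Pi\<^sub>M (params k L d) (Mp m sd) \<rightarrow>\<^sub>M Mp m sd i"
    by (simp add: Mp_perm)
qed

lemma T0_pres:
  assumes "\<forall>g\<le>L. sd g > 0" "1 \<le> L"
  shows "distr (init_measure k L d m sd) (init_measure k L d m sd) (T0 k L d x1 x2) = init_measure k L d m sd"
proof -
  have "distr (Pi\<^sub>M (params k L d) (Mp m sd)) (\<Pi>\<^sub>M i\<in>params k L d. Mp m sd (perm k x1 x2 i))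
     (\<lambda>\<omega>. \<lambda>n\<in>params k L d. \<omega> (perm k x1 x2 n)) = (\<Pi>\<^sub>M i\<in>params k L d. Mp m sd (perm k x1 x2 i))"
  proof (rule distr_PiM_reindex)
    show "prob_space (Mp m sd i)" if "i \<in> params k L d" for i
    proof -
      have "pgroup i \<le> L" using that assms(2) by (rule params_group)
      then have "0 < sd (pgroup i)" using assms(1) by auto
      then show ?thesis unfolding Mp_def by (rule prob_space_normal_density)
    qed
    show "inj_on (perm k x1 x2) (params k L d)" by (metis inj_onI perm_perm)
    show "perm k x1 x2 \<in> params k L d \<rightarrow> params k L d" by (simp add: perm_params)
  qed
  then show ?thesis by (simp add: Mp_perm init_def' T0_def[abs_def])
qed

lemma T0_eq: "\<omega> \<in> space (init_measure k L d m sd) \<Longrightarrow> T0 k L d x1 x2 \<omega> = \<omega> \<circ> perm k x1 x2"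
  by (rule ext) (auto simp: T0_def init_measure_def space_PiM PiE_def extensional_def perm_params)




lemma exists_x:
  fixes z :: "('x::finite, 'w::finite) template" and U :: "'x set"
  assumes wild: "\<forall>c \<in> set z. \<exists>w. c = Inr w" and len: "length z = k"
    and U: "card U \<ge> k" and s0: "inj (s0 :: 'w \<Rightarrow> 'x)"
  shows "\<exists>x. length x = k \<and> set x \<subseteq> U \<and> matches x z"
proof -
  define W where "W = {w. Inr w \<in> set z}"
  have "card (Inr ` W :: ('x + 'w) set) \<le> card (set z)"
    by (rule card_mono) (auto simp: W_def)
  also have "\<dots> \<le> k" using len card_length by blast
  finally have cW: "card W \<le> k" by (simp add: card_image)
  obtain g where g: "g ` W \<subseteq> U" "inj_on g W"
    using card_le_inj[of W U] cW U by auto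
  have cu: "card (UNIV :: 'w set) \<le> card (UNIV :: 'x set)"
    using card_inj_on_le[OF s0, of UNIV] by auto
  have cgW: "card (g ` W) = card W" using g(2) by (rule card_image)
  have "card (UNIV - W) \<le> card (UNIV - g ` W)"
    using cu cgW by (simp add: card_Diff_subset)
  then obtain h where h: "h ` (UNIV - W) \<subseteq> UNIV - g ` W" "inj_on h (UNIV - W)"
    using card_le_inj[of "UNIV - W" "UNIV - g ` W"] by auto
  define s where "s w = (if w \<in> W then g w else h w)" for w
  have inj: "inj s"
  proof (rule injI)
    fix a b assume "s a = s b"
    show "a = b"
    proof (cases "a \<in> W"; cases "b \<in> W")
      assume "a \<in> W" "b \<in> W" then show ?thesis using \<open>s a = s b\<close> g(2) by (simp add: s_def inj_on_def)
    next
      assume "a \<notin> W" "b \<notin> W" then show ?thesis using \<open>s a = s b\<close> h(2) by (simp add: s_def inj_on_def)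
    next
      assume "a \<in> W" "b \<notin> W"
      then have "s b \<notin> g ` W" "s a \<in> g ` W" using h(1) by (auto simp: s_def)
      then show ?thesis using \<open>s a = s b\<close> by simp
    next
      assume "a \<notin> W" "b \<in> W"
      then have "s a \<notin> g ` W" "s b \<in> g ` W" using h(1) by (auto simp: s_def)
      then show ?thesis using \<open>s a = s b\<close> by simp
    qed
  qed
  define x where "x = sub z s"
  have "length x = k" using len by (simp add: x_def sub_def)
  moreover have "set x \<subseteq> U"
  proof
    fix a assume "a \<in> set x"
    then obtain c where c: "c \<in> set z" "a = case_sum id s c" by (auto simp: x_def sub_def)
    then obtain w where "c = Inr w" using wild by auto
    with c have "w \<in> W" "a = g w" by (auto simp: W_def s_def)
    then show "a \<in> U" using g by auto
  qed
  moreover have "matches x z"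
  proof -
    have "range s \<inter> {a. Inl a \<in> set z} = {}" using wild by fastforce
    then show ?thesis unfolding matches_def x_def using inj by blast
  qed
  ultimately show ?thesis by blast
qed


lemma sq_ineq: "(a - b)\<^sup>2 / 2 \<le> (g - a)\<^sup>2 + (g - (b::real))\<^sup>2"
proof -
  have "(g - a)\<^sup>2 + (g - b)\<^sup>2 - (a - b)\<^sup>2 / 2 = 2 * (g - (a + b) / 2)\<^sup>2"
    by (simp add: power2_eq_square field_simps)
  moreover have "0 \<le> 2 * (g - (a + b) / 2)\<^sup>2" by simp
  ultimately show ?thesis by linarith
qed

lemma core:
  fixes \<mu> :: "('x::finite, 'w::finite) template pmf" and x1 x2 :: "'x list"
    and \<mu>sub :: "('x, 'w) template \<Rightarrow> ('w \<Rightarrow> 'x) pmf" and fstar :: "('x, 'w) template \<Rightarrow> real"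
    and \<sigma> :: real and k L d :: nat and m sd :: "nat \<Rightarrow> real" and t :: nat and \<phi> :: "real \<Rightarrow> real"
    and \<eta> :: "nat \<Rightarrow> real"
  defines "D \<equiv> data_dist \<mu> \<mu>sub fstar \<sigma>"
  defines "\<Omega> \<equiv> sgd_space k L d m sd D t"
  defines "G \<equiv> \<lambda>x \<omega>. mlp \<phi> k L d (sgd \<phi> k L d \<eta> (fst \<omega>) (snd \<omega>) t) x"
  assumes phi: "\<forall>u. \<phi> differentiable (at u)" and L: "1 \<le> L" and sd: "\<forall>g\<le>L. sd g > 0"
    and s: "0 \<le> \<sigma>" and len: "\<forall>z \<in> set_pmf \<mu>. length z = k"
    and x1: "length x1 = k" "set x1 \<subseteq> X_uns D"
    and x2: "length x2 = k" "set x2 \<subseteq> X_uns D"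
  shows "ennreal ((a - b)\<^sup>2 / 4) \<le> (\<integral>\<^sup>+ \<omega>. ennreal ((G x1 \<omega> - a)\<^sup>2) \<partial>\<Omega>) \<or>
         ennreal ((a - b)\<^sup>2 / 4) \<le> (\<integral>\<^sup>+ \<omega>. ennreal ((G x2 \<omega> - b)\<^sup>2) \<partial>\<Omega>)"
proof -
  let ?I = "init_measure k L d m sd :: ('x pidx \<Rightarrow> real) measure"
  let ?P = "PiM {1..t} (\<lambda>_. D)"
  let ?T = "\<lambda>\<omega>. (T0 k L d x1 x2 (fst \<omega>), snd \<omega>)"
  have Dp: "prob_space D" unfolding D_def using s by (rule dd_prob)
  have Ip: "prob_space ?I" using sd L by (rule init_prob)
  have Pp: "prob_space ?P" using Dp by (intro prob_space_PiM)
  have Op: "prob_space \<Omega>" unfolding \<Omega>_def sgd_space_def using Ip Pp by (rule prob_space_pair)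
  have sD: "sets D = sets (count_space UNIV \<Otimes>\<^sub>M borel)" unfolding D_def by (rule dd_sets)
  have Gm: "G x \<in> borel_measurable \<Omega>" for x
    unfolding G_def \<Omega>_def
    by (rule mlp_meas[OF phi sgd_meas[OF phi sD]]) simp_all
  have Tm: "?T \<in> \<Omega> \<rightarrow>\<^sub>M \<Omega>"
    unfolding \<Omega>_def sgd_space_def
    by (intro measurable_Pair measurable_compose[OF measurable_fst T0_meas] measurable_snd)
  have pres: "distr \<Omega> \<Omega> ?T = \<Omega>"
  proof -
    have sf: "sigma_finite_measure (distr ?P ?P (\<lambda>x. x))"
      using Pp by (simp add: prob_space_imp_sigma_finite)
    have e1: "distr ?I ?I (T0 k L d x1 x2) \<Otimes>\<^sub>M distr ?P ?P (\<lambda>x. x) =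
          distr (?I \<Otimes>\<^sub>M ?P) (?I \<Otimes>\<^sub>M ?P) (\<lambda>(x, y). (T0 k L d x1 x2 x, y))"
      by (rule pair_measure_distr[OF T0_meas measurable_ident[unfolded id_def] sf])
    have e2: "(\<lambda>(x, y). (T0 k L d x1 x2 x, y)) = ?T" by (rule ext) (simp add: split_def)
    have e3: "distr ?I ?I (T0 k L d x1 x2) = ?I" by (rule T0_pres[OF sd L])
    have e4: "distr ?P ?P (\<lambda>x. x) = ?P" by (rule distr_id)
    have "?I \<Otimes>\<^sub>M ?P = distr (?I \<Otimes>\<^sub>M ?P) (?I \<Otimes>\<^sub>M ?P) (\<lambda>(x, y). (T0 k L d x1 x2 x, y))"
      using e1 unfolding e3 e4 .
    also have "\<dots> = distr (?I \<Otimes>\<^sub>M ?P) (?I \<Otimes>\<^sub>M ?P) ?T" unfolding e2 ..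
    finally show ?thesis unfolding \<Omega>_def sgd_space_def by simp
  qed
  let ?good = "\<lambda>y::'x list \<times> real. length (fst y) = k \<and> set (fst y) \<subseteq> X_seen D"
  have gD: "AE y in D. ?good y"
    using dd_len[OF s len, of \<mu>sub fstar] dd_seen[of D] unfolding D_def by auto
  have gP: "AE \<omega> in ?P. \<forall>j\<in>{1..t}. ?good (\<omega> j)"
  proof (rule eventually_ball_finite)
    show "finite {1..t}" by simp
    show "\<forall>j\<in>{1..t}. AE \<omega> in ?P. ?good (\<omega> j)"
    proof
      fix j assume "j \<in> {1..t}"
      then show "AE \<omega> in ?P. ?good (\<omega> j)" by (rule AE_PiM_component[where M="\<lambda>_. D", OF Dp _ gD])
    qed
  qed
  have gO: "AE \<omega> in \<Omega>. \<forall>j\<in>{1..t}. ?good (snd \<omega> j)"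
    unfolding \<Omega>_def sgd_space_def
    by (rule AE_snd_pair[OF prob_space_imp_sigma_finite[OF Pp] gP])
  have eqAE: "AE \<omega> in \<Omega>. G x1 (?T \<omega>) = G x2 \<omega>"
    using gO
  proof (rule AE_mp, intro AE_I2 impI)
    fix \<omega> assume \<omega>: "\<omega> \<in> space \<Omega>" and gd: "\<forall>j\<in>{1..t}. ?good (snd \<omega> j)"
    have f: "fst \<omega> \<in> space ?I" using \<omega> by (auto simp: \<Omega>_def sgd_space_def space_pair_measure)
    have fixs: "\<forall>j\<in>{1..t}. \<forall>i<k. tau (x1!i) (x2!i) (fst (snd \<omega> j)!i) = fst (snd \<omega> j)!i"
    proof (intro ballI allI impI)
      fix j i assume j: "j \<in> {1..t}" and i: "i < k"
      have "length (fst (snd \<omega> j)) = k" "set (fst (snd \<omega> j)) \<subseteq> X_seen D" using gd j by auto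
      then have "fst (snd \<omega> j) ! i \<in> X_seen D" using i nth_mem by blast
      moreover have "x1 ! i \<notin> X_seen D" "x2 ! i \<notin> X_seen D"
      proof -
        have "x1 ! i \<in> set x1" "x2 ! i \<in> set x2" using x1(1) x2(1) i by simp_all
        then show "x1 ! i \<notin> X_seen D" "x2 ! i \<notin> X_seen D" using x1(2) x2(2) by (auto simp: X_uns_def)
      qed
      ultimately show "tau (x1!i) (x2!i) (fst (snd \<omega> j)!i) = fst (snd \<omega> j)!i"
        by (auto simp: tau_def)
    qed
    have "G x1 (?T \<omega>) = mlp \<phi> k L d (sgd \<phi> k L d \<eta> (fst \<omega> \<circ> perm k x1 x2) (snd \<omega>) t) x1"
      using T0_eq[OF f] by (simp add: G_def)
    also have "\<dots> = mlp \<phi> k L d (sgd \<phi> k L d \<eta> (fst \<omega>) (snd \<omega>) t \<circ> perm k x1 x2) x1"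
      using sgd_perm[OF fixs] by simp
    also have "\<dots> = G x2 \<omega>"
      unfolding G_def by (rule mlp_perm) (simp add: tau_def)
    finally show "G x1 (?T \<omega>) = G x2 \<omega>" .
  qed
  have F1m: "(\<lambda>\<omega>. ennreal ((G x1 \<omega> - a)\<^sup>2)) \<in> borel_measurable \<Omega>"
    using Gm[of x1] by measurable
  have "(\<integral>\<^sup>+ \<omega>. ennreal ((G x1 \<omega> - a)\<^sup>2) \<partial>\<Omega>) = (\<integral>\<^sup>+ \<omega>. ennreal ((G x1 \<omega> - a)\<^sup>2) \<partial>distr \<Omega> \<Omega> ?T)"
    by (simp only: pres)
  also have "\<dots> = (\<integral>\<^sup>+ \<omega>. ennreal ((G x1 (?T \<omega>) - a)\<^sup>2) \<partial>\<Omega>)"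
    by (rule nn_integral_distr[OF Tm]) (simp add: F1m)
  also have "\<dots> = (\<integral>\<^sup>+ \<omega>. ennreal ((G x2 \<omega> - a)\<^sup>2) \<partial>\<Omega>)"
    by (rule nn_integral_cong_AE, rule AE_mp[OF eqAE], intro AE_I2 impI) simp
  finally have A: "(\<integral>\<^sup>+ \<omega>. ennreal ((G x1 \<omega> - a)\<^sup>2) \<partial>\<Omega>) = (\<integral>\<^sup>+ \<omega>. ennreal ((G x2 \<omega> - a)\<^sup>2) \<partial>\<Omega>)" .
  let ?c = "(a - b)\<^sup>2 / 4"
  have ma: "(\<lambda>\<omega>. ennreal ((G x2 \<omega> - a)\<^sup>2)) \<in> borel_measurable \<Omega>"
    using Gm[of x2] by measurable
  have mb: "(\<lambda>\<omega>. ennreal ((G x2 \<omega> - b)\<^sup>2)) \<in> borel_measurable \<Omega>"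
    using Gm[of x2] by measurable
  have "(\<integral>\<^sup>+ \<omega>. ennreal ((G x2 \<omega> - a)\<^sup>2) \<partial>\<Omega>) + (\<integral>\<^sup>+ \<omega>. ennreal ((G x2 \<omega> - b)\<^sup>2) \<partial>\<Omega>)
      = (\<integral>\<^sup>+ \<omega>. ennreal ((G x2 \<omega> - a)\<^sup>2) + ennreal ((G x2 \<omega> - b)\<^sup>2) \<partial>\<Omega>)"
    by (rule nn_integral_add[OF ma mb, symmetric])
  also have "\<dots> \<ge> (\<integral>\<^sup>+ \<omega>. ennreal (2 * ?c) \<partial>\<Omega>)"
  proof (rule nn_integral_mono)
    fix \<omega>
    have "2 * ?c \<le> (G x2 \<omega> - a)\<^sup>2 + (G x2 \<omega> - b)\<^sup>2" using sq_ineq[of a b "G x2 \<omega>"] by simp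
    then show "ennreal (2 * ?c) \<le> ennreal ((G x2 \<omega> - a)\<^sup>2) + ennreal ((G x2 \<omega> - b)\<^sup>2)"
      by (simp add: ennreal_plus[symmetric] del: ennreal_plus)
  qed
  moreover have "(\<integral>\<^sup>+ \<omega>. ennreal (2 * ?c) \<partial>\<Omega>) = ennreal ?c + ennreal ?c"
    using prob_space.emeasure_space_1[OF Op] by (simp add: ennreal_plus[symmetric] del: ennreal_plus)
  ultimately have sum: "ennreal ?c + ennreal ?c \<le> (\<integral>\<^sup>+ \<omega>. ennreal ((G x2 \<omega> - a)\<^sup>2) \<partial>\<Omega>) + (\<integral>\<^sup>+ \<omega>. ennreal ((G x2 \<omega> - b)\<^sup>2) \<partial>\<Omega>)"
    by simp
  show ?thesis
  proof (rule ccontr)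
    assume "\<not> ?thesis"
    then have "(\<integral>\<^sup>+ \<omega>. ennreal ((G x2 \<omega> - a)\<^sup>2) \<partial>\<Omega>) < ennreal ?c" "(\<integral>\<^sup>+ \<omega>. ennreal ((G x2 \<omega> - b)\<^sup>2) \<partial>\<Omega>) < ennreal ?c"
      using A by (auto simp: not_le)
    then have "(\<integral>\<^sup>+ \<omega>. ennreal ((G x2 \<omega> - a)\<^sup>2) \<partial>\<Omega>) + (\<integral>\<^sup>+ \<omega>. ennreal ((G x2 \<omega> - b)\<^sup>2) \<partial>\<Omega>) < ennreal ?c + ennreal ?c"
      by (simp add: add_strict_mono)
    with sum show False by simp
  qed
qed


theorem mainTheorem16:
  fixes \<mu> :: "('x::finite, 'w::finite) template pmf"
    and fstar :: "('x, 'w) template \<Rightarrow> real"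
    and k :: nat
  assumes len: "\<forall>z \<in> set_pmf \<mu>. length z = k"
    and wild: "\<forall>z \<in> set_pmf \<mu>. \<forall>c \<in> set z. \<exists>w. c = Inr w"
    and noncst: "\<exists>z1 \<in> set_pmf \<mu>. \<exists>z2 \<in> set_pmf \<mu>. fstar z1 \<noteq> fstar z2"
  shows "\<exists>c > 0. \<forall>\<mu>sub \<sigma> (\<phi>::real \<Rightarrow> real) L d m sd \<eta> t.
     template_data k \<mu> \<mu>sub \<sigma> \<and>
     card (X_uns (data_dist \<mu> \<mu>sub fstar \<sigma>)) \<ge> k \<and>
     (\<forall>u. \<phi> differentiable (at u)) \<and> 1 \<le> L \<and>
     (\<forall>g \<le> L. sd g > 0) \<and> (\<forall>s. \<eta> s > 0)
     \<longrightarrow> (\<exists>x z. z \<in> set_pmf \<mu> \<and> length x = k \<and> set x \<subseteq> X_uns (data_dist \<mu> \<mu>sub fstar \<sigma>) \<and>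
            matches x z \<and>
            (\<integral>\<^sup>+ \<omega>. ennreal ((mlp \<phi> k L d (sgd \<phi> k L d \<eta> (fst \<omega>) (snd \<omega>) t) x - fstar z)\<^sup>2)
               \<partial>sgd_space k L d m sd (data_dist \<mu> \<mu>sub fstar \<sigma>) t) \<ge> ennreal c)"
proof -
  obtain z1 z2 where z1: "z1 \<in> set_pmf \<mu>" and z2: "z2 \<in> set_pmf \<mu>" and ne: "fstar z1 \<noteq> fstar z2"
    using noncst by blast
  define c where "c = (fstar z1 - fstar z2)\<^sup>2 / 4"
  have cpos: "c > 0" using ne by (simp add: c_def)
  show ?thesis
  proof (rule exI[of _ c], intro conjI allI impI)
    show "c > 0" by (rule cpos)
    fix \<mu>sub :: "('x, 'w) template \<Rightarrow> ('w \<Rightarrow> 'x) pmf" and \<sigma> :: real and \<phi> :: "real \<Rightarrow> real"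
      and L d :: nat and m sd \<eta> :: "nat \<Rightarrow> real" and t :: nat
    assume H: "template_data k \<mu> \<mu>sub \<sigma> \<and>
     card (X_uns (data_dist \<mu> \<mu>sub fstar \<sigma>)) \<ge> k \<and>
     (\<forall>u. \<phi> differentiable (at u)) \<and> 1 \<le> L \<and>
     (\<forall>g \<le> L. sd g > 0) \<and> (\<forall>s. \<eta> s > 0)"
    let ?D = "data_dist \<mu> \<mu>sub fstar \<sigma>"
    have td: "template_data k \<mu> \<mu>sub \<sigma>" and cU: "card (X_uns ?D) \<ge> k"
      and phi: "\<forall>u. \<phi> differentiable (at u)" and L: "1 \<le> L" and sd: "\<forall>g \<le> L. sd g > 0"
      using H by auto
    have s: "0 \<le> \<sigma>" using td by (simp add: template_data_def)
    obtain s0 where "s0 \<in> set_pmf (\<mu>sub z1)" using set_pmf_not_empty by fast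
    then have s0: "inj s0" using td z1 by (auto simp: template_data_def)
    obtain x1 where x1: "length x1 = k" "set x1 \<subseteq> X_uns ?D" "matches x1 z1"
      using exists_x[of z1 k "X_uns ?D" s0] wild z1 len cU s0 by auto
    obtain x2 where x2: "length x2 = k" "set x2 \<subseteq> X_uns ?D" "matches x2 z2"
      using exists_x[of z2 k "X_uns ?D" s0] wild z2 len cU s0 by auto
    have "ennreal c \<le> (\<integral>\<^sup>+ \<omega>. ennreal ((mlp \<phi> k L d (sgd \<phi> k L d \<eta> (fst \<omega>) (snd \<omega>) t) x1 - fstar z1)\<^sup>2) \<partial>sgd_space k L d m sd ?D t) \<or>
          ennreal c \<le> (\<integral>\<^sup>+ \<omega>. ennreal ((mlp \<phi> k L d (sgd \<phi> k L d \<eta> (fst \<omega>) (snd \<omega>) t) x2 - fstar z2)\<^sup>2) \<partial>sgd_space k L d m sd ?D t)"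
      unfolding c_def by (rule core[OF phi L sd s len x1(1,2) x2(1,2)])
    then show "\<exists>x z. z \<in> set_pmf \<mu> \<and> length x = k \<and> set x \<subseteq> X_uns ?D \<and>
            matches x z \<and>
            (\<integral>\<^sup>+ \<omega>. ennreal ((mlp \<phi> k L d (sgd \<phi> k L d \<eta> (fst \<omega>) (snd \<omega>) t) x - fstar z)\<^sup>2)
               \<partial>sgd_space k L d m sd ?D t) \<ge> ennreal c"
      using x1 x2 z1 z2 by blast
  qed
qed


end
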